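(* Every approximant $A\in\mathcal A$ is in normal form with respect to the $\mathsf v$-reduction extended to $\Lambda_\bot$.
   Context: $\Lambda_\bot$ is the set of $\lambda$-terms possibly containing a constant $\bot$: $M::=V\mid MN$, with values $V::=\bot\mid x\mid\lambda x.M$, up to $\alpha$-conversion. Extended rules on $\Lambda_\bot$: $(\beta_v)$ $(\lambda x.M)V\to M\{x:=V\}$ if $V$ is a value (including $\bot$); $(\sigma_1)$ $(\lambda x.M)NP\to(\lambda x.MP)N$ if $x\notin\mathrm{FV}(P)$; $(\sigma_3)$ $V((\lambda x.M)N)\to(\lambda x.VM)N$ if $V$ is a value and $x\notin\mathrm{FV}(V)$; $\mathsf v$-reduction is the contextual closure of their union. Approximants $\mathcal A$ ($k\ge0$): $A::=B\mid C$; $B::=x\mid\lambda x.A\mid\bot\mid xBA_1\cdots A_k$; $C::=(\lambda x.A)(yBA_1\cdots A_k)$. *)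

theory Defs
  imports Main
begin

text \<open>Lambda-terms with a constant Bot, up to alpha-conversion, represented
  with de Bruijn indices (so alpha-equivalent terms are literally equal).\<close>

datatype trm = Bot | Var nat | Lam trm | App trm trm

fun is_value :: "trm \<Rightarrow> bool" where
  "is_value Bot = True"
| "is_value (Var x) = True"
| "is_value (Lam M) = True"
| "is_value (App M N) = False"

fun lift :: "trm \<Rightarrow> nat \<Rightarrow> trm" where
  "lift Bot k = Bot"
| "lift (Var i) k = (if i < k then Var i else Var (Suc i))"
| "lift (Lam M) k = Lam (lift M (Suc k))"
| "lift (App M N) k = App (lift M k) (lift N k)"

fun subst :: "trm \<Rightarrow> nat \<Rightarrow> trm \<Rightarrow> trm" where
  "subst Bot k N = Bot"
| "subst (Var i) k N = (if k < i then Var (i - 1) else if i = k then N else Var i)"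
| "subst (Lam M) k N = Lam (subst M (Suc k) (lift N 0))"
| "subst (App M1 M2) k N = App (subst M1 k N) (subst M2 k N)"

text \<open>v-reduction on Lambda_Bot: contextual closure of beta_v, sigma_1, sigma_3.
  The side conditions x \<notin> FV(P), x \<notin> FV(V) are realised by lifting.\<close>
inductive red_v :: "trm \<Rightarrow> trm \<Rightarrow> bool" (infix "\<rightarrow>\<^sub>v" 50) where
  beta_v: "is_value V \<Longrightarrow> App (Lam M) V \<rightarrow>\<^sub>v subst M 0 V"
| sigma1: "App (App (Lam M) N) P \<rightarrow>\<^sub>v App (Lam (App M (lift P 0))) N"
| sigma3: "is_value V \<Longrightarrow> App V (App (Lam M) N) \<rightarrow>\<^sub>v App (Lam (App (lift V 0) M)) N"
| ctx_lam: "M \<rightarrow>\<^sub>v M' \<Longrightarrow> Lam M \<rightarrow>\<^sub>v Lam M'"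
| ctx_appL: "M \<rightarrow>\<^sub>v M' \<Longrightarrow> App M N \<rightarrow>\<^sub>v App M' N"
| ctx_appR: "N \<rightarrow>\<^sub>v N' \<Longrightarrow> App M N \<rightarrow>\<^sub>v App M N'"

definition v_normal :: "trm \<Rightarrow> bool" where
  "v_normal M \<longleftrightarrow> \<not> (\<exists>M'. M \<rightarrow>\<^sub>v M')"

text \<open>Approximants: A ::= B | C; B ::= x | \<lambda>x.A | Bot | x B A1...Ak;
  C ::= (\<lambda>x.A)(y B A1...Ak), k \<ge> 0.\<close>
inductive approxA :: "trm \<Rightarrow> bool" and approxB :: "trm \<Rightarrow> bool" where
  A_B: "approxB M \<Longrightarrow> approxA M"
| A_C: "approxA A \<Longrightarrow> approxB B \<Longrightarrow> list_all approxA As \<Longrightarrow>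
        approxA (App (Lam A) (foldl App (App (Var y) B) As))"
| B_var: "approxB (Var x)"
| B_lam: "approxA A \<Longrightarrow> approxB (Lam A)"
| B_bot: "approxB Bot"
| B_app: "approxB B \<Longrightarrow> list_all approxA As \<Longrightarrow> approxB (foldl App (App (Var x) B) As)"

end

theory Submission
  imports Defs
begin

inductive gA :: "trm \<Rightarrow> bool" and gB :: "trm \<Rightarrow> bool" and ne :: "trm \<Rightarrow> bool" where
  gA_B: "gB M \<Longrightarrow> gA M"
| gA_C: "gA A \<Longrightarrow> ne N \<Longrightarrow> gA (App (Lam A) N)"
| gB_var: "gB (Var x)"
| gB_lam: "gA A \<Longrightarrow> gB (Lam A)"
| gB_bot: "gB Bot"
| gB_ne: "ne M \<Longrightarrow> gB M"
| ne_base: "gB B \<Longrightarrow> ne (App (Var y) B)"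
| ne_app: "ne M \<Longrightarrow> gA N \<Longrightarrow> ne (App M N)"

lemma ne_simps[simp]: "\<not> ne (Lam M)" "\<not> ne (Var x)" "\<not> ne Bot"
  by (auto elim: ne.cases)

lemma ne_val: "ne M \<Longrightarrow> \<not> is_value M"
  by (auto elim: ne.cases)

lemma ne_lamapp[simp]: "\<not> ne (App (Lam M) N)"
  by (auto elim: ne.cases)

lemma ne_app_iff: "ne (App M N) \<longleftrightarrow> (\<exists>y. M = Var y \<and> gB N) \<or> (ne M \<and> gA N)"
  by (auto elim: ne.cases intro: gA_gB_ne.intros)

lemma gB_app: "gB (App M N) \<longleftrightarrow> ne (App M N)"
  by (auto elim: gB.cases intro: gB_ne)

lemma gA_app: "gA (App M N) \<longleftrightarrow> ne (App M N) \<or> (\<exists>A. M = Lam A \<and> gA A \<and> ne N)"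
  by (auto elim: gA.cases simp: gB_app intro: gA_gB_ne.intros gB_ne)


lemma gB_lam_iff: "gB (Lam M) \<longleftrightarrow> gA M"
  by (auto elim: gB.cases intro: gA_gB_ne.intros)

lemma gA_lam_iff: "gA (Lam M) \<longleftrightarrow> gA M"
  by (auto elim: gA.cases simp: gB_lam_iff intro: gA_gB_ne.intros)

lemma g_simps[simp]: "gA (Var y)" "gB (Var y)" "gA Bot" "gB Bot"
  by (auto intro: gA_gB_ne.intros)

lemma red_not_g: "M \<rightarrow>\<^sub>v M' \<Longrightarrow> \<not> gA M \<and> \<not> gB M \<and> \<not> ne M"
proof (induction rule: red_v.induct)
  case (beta_v V M)
  then show ?case
    by (auto simp: gB_app gA_app ne_app_iff dest: ne_val)
next
  case (sigma1 M N P)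
  then show ?case
    by (auto simp: gB_app gA_app ne_app_iff)
next
  case (sigma3 V M N)
  then show ?case
    by (auto simp: gB_app gA_app ne_app_iff dest: ne_val)
next
  case (ctx_lam M M')
  then show ?case
    by (simp add: gA_lam_iff gB_lam_iff)
next
  case (ctx_appL M M' N)
  then show ?case
    by (auto simp: gB_app gA_app ne_app_iff gA_lam_iff gB_lam_iff)
next
  case (ctx_appR N N' M)
  then show ?case
    by (auto simp: gB_app gA_app ne_app_iff)
qed

lemma ne_foldl: "ne M \<Longrightarrow> list_all gA As \<Longrightarrow> ne (foldl App M As)"
  by (induction As arbitrary: M) (auto intro: ne_app)

lemma la: "list_all (\<lambda>x. P x \<and> Q x) xs \<Longrightarrow> list_all Q xs"
  by (induction xs) auto

lemma approx_g: "(approxA M \<longrightarrow> gA M) \<and> (approxB M \<longrightarrow> gB M)"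
proof (induction rule: approxA_approxB.induct)
  case (A_C A B As y)
  then show ?case
    by (metis gA_C ne_foldl ne_base la)
next
  case (B_app B As x)
  then show ?case
    by (metis gB_ne ne_foldl ne_base la)
qed (auto intro: gA_B gB_var gB_lam gB_bot)

theorem lemma2p3:
  assumes "approxA A"
  shows "v_normal A"
  using assms approx_g red_not_g unfolding v_normal_def by blast

end
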